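(* Let $B_1,\dots,B_n$ be $n\times n$ complex Hadamard matrices (normalized so that all entries have absolute value $1/\sqrt n$), and let $B=[B_1\,|\,B_2\,|\cdots|\,B_n]$ be the $n\times n^2$ matrix whose columns are all columns of all $B_i$. Let $w_1,\dots,w_n\in\mathbb{C}^{n^2}$ be the rows of $B$. Then $\{B_1,\dots,B_n\}$ is a complete system of mutually unbiased Hadamards if and only if the vectors $w_i\circ w_j$, $1\le i\le j\le n$, are pairwise orthogonal (i.e. $\langle w_i\circ w_j| w_k\circ w_l\rangle=0$ whenever $\{i,j\}\neq\{k,l\}$ as multisets).
   Context: A complex Hadamard matrix is an $n\times n$ unitary matrix all of whose entries have the same absolute value $1/\sqrt{n}$. Two such matrices are mutually unbiased if $|\langle x|y\rangle|=1/\sqrt n$ for every column $x$ of one and every column $y$ of the other. A complete system of mutually unbiased Hadamards (MUHs) in $\mathbb{C}^n$ is a set of $n$ complex Hadamard matrices that are pairwise mutually unbiased (equivalently, together with the identity matrix their column sets form $n+1$ mutually unbiased bases). $\circ$ is the entrywise (Schur) product; $\langle x|y\rangle=\sum_t\overline{x_t}y_t$. *)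

theory Defs
  imports Complex_Main
begin

text \<open>Vectors in C^m are functions nat => complex, used on indices < m;
 n x n matrices are functions nat => nat => complex (row, column), used on indices < n.\<close>

definition cinner :: "nat \<Rightarrow> (nat \<Rightarrow> complex) \<Rightarrow> (nat \<Rightarrow> complex) \<Rightarrow> complex" where
  "cinner m x y = (\<Sum>t<m. cnj (x t) * y t)"

definition schur :: "(nat \<Rightarrow> complex) \<Rightarrow> (nat \<Rightarrow> complex) \<Rightarrow> (nat \<Rightarrow> complex)" where
  "schur x y = (\<lambda>t. x t * y t)"

definition col :: "(nat \<Rightarrow> nat \<Rightarrow> complex) \<Rightarrow> nat \<Rightarrow> (nat \<Rightarrow> complex)" where
  "col U j = (\<lambda>r. U r j)"

definition unitary_mat :: "nat \<Rightarrow> (nat \<Rightarrow> nat \<Rightarrow> complex) \<Rightarrow> bool" where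
  "unitary_mat n U \<longleftrightarrow>
     (\<forall>j<n. \<forall>k<n. (\<Sum>t<n. cnj (U t j) * U t k) = (if j = k then 1 else 0))"

definition complex_hadamard :: "nat \<Rightarrow> (nat \<Rightarrow> nat \<Rightarrow> complex) \<Rightarrow> bool" where
  "complex_hadamard n U \<longleftrightarrow> unitary_mat n U \<and>
     (\<forall>i<n. \<forall>j<n. cmod (U i j) = 1 / sqrt (real n))"

definition mutually_unbiased :: "nat \<Rightarrow> (nat \<Rightarrow> nat \<Rightarrow> complex) \<Rightarrow> (nat \<Rightarrow> nat \<Rightarrow> complex) \<Rightarrow> bool" where
  "mutually_unbiased n U V \<longleftrightarrow>
     (\<forall>j<n. \<forall>k<n. cmod (cinner n (col U j) (col V k)) = 1 / sqrt (real n))"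

definition complete_MUH :: "nat \<Rightarrow> (nat \<Rightarrow> nat \<Rightarrow> nat \<Rightarrow> complex) \<Rightarrow> bool" where
  "complete_MUH n B \<longleftrightarrow> (\<forall>a<n. complex_hadamard n (B a)) \<and>
     (\<forall>a<n. \<forall>b<n. a \<noteq> b \<longrightarrow> mutually_unbiased n (B a) (B b))"

text \<open>Row i of the n x n^2 block matrix [B_0 | ... | B_{n-1}]: entry at column a*n + c is (B_a)_{i,c}.\<close>
definition block_row :: "nat \<Rightarrow> (nat \<Rightarrow> nat \<Rightarrow> nat \<Rightarrow> complex) \<Rightarrow> nat \<Rightarrow> (nat \<Rightarrow> complex)" where
  "block_row n B i = (\<lambda>m. B (m div n) i (m mod n))"

end

theory Submission
  imports Defs
begin
lemma frob:
  fixes N :: "'a \<Rightarrow> 'b \<Rightarrow> complex"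
  assumes "finite A" "finite P"
  shows "(\<Sum>u\<in>A. \<Sum>v\<in>A. (cmod (\<Sum>r\<in>P. cnj (N v r) * N u r))\<^sup>2)
       = (\<Sum>r\<in>P. \<Sum>s\<in>P. (cmod (\<Sum>u\<in>A. cnj (N u r) * N u s))\<^sup>2)"
proof -
  have e: "\<And>z. (complex_of_real (cmod z))\<^sup>2 = z * cnj z" using complex_norm_square by simp
  have L: "complex_of_real (\<Sum>u\<in>A. \<Sum>v\<in>A. (cmod (\<Sum>r\<in>P. cnj (N v r) * N u r))\<^sup>2)
     = (\<Sum>u\<in>A. \<Sum>v\<in>A. \<Sum>r\<in>P. \<Sum>s\<in>P. cnj (N u r) * N v r * (N u s * cnj (N v s)))"
    unfolding of_real_sum of_real_power e by (simp add: sum_distrib_left sum_distrib_right mult_ac)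
  have R: "complex_of_real (\<Sum>r\<in>P. \<Sum>s\<in>P. (cmod (\<Sum>u\<in>A. cnj (N u r) * N u s))\<^sup>2)
     = (\<Sum>r\<in>P. \<Sum>s\<in>P. \<Sum>u\<in>A. \<Sum>v\<in>A. cnj (N u r) * N u s * (N v r * cnj (N v s)))"
    unfolding of_real_sum of_real_power e by (simp add: sum_distrib_left sum_distrib_right mult_ac)
  also have "\<dots> = (\<Sum>r\<in>P. \<Sum>u\<in>A. \<Sum>s\<in>P. \<Sum>v\<in>A. cnj (N u r) * N u s * (N v r * cnj (N v s)))"
    by (rule sum.cong[OF refl], rule sum.swap)
  also have "\<dots> = (\<Sum>u\<in>A. \<Sum>r\<in>P. \<Sum>s\<in>P. \<Sum>v\<in>A. cnj (N u r) * N u s * (N v r * cnj (N v s)))"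
    by (rule sum.swap)
  also have "\<dots> = (\<Sum>u\<in>A. \<Sum>r\<in>P. \<Sum>v\<in>A. \<Sum>s\<in>P. cnj (N u r) * N u s * (N v r * cnj (N v s)))"
    by (intro sum.cong refl sum.swap)
  also have "\<dots> = (\<Sum>u\<in>A. \<Sum>v\<in>A. \<Sum>r\<in>P. \<Sum>s\<in>P. cnj (N u r) * N u s * (N v r * cnj (N v s)))"
    by (intro sum.cong refl sum.swap)
  also have "\<dots> = (\<Sum>u\<in>A. \<Sum>v\<in>A. \<Sum>r\<in>P. \<Sum>s\<in>P. cnj (N u r) * N v r * (N u s * cnj (N v s)))"
    by (intro sum.cong refl) (simp add: mult_ac)
  finally have "complex_of_real (\<Sum>r\<in>P. \<Sum>s\<in>P. (cmod (\<Sum>u\<in>A. cnj (N u r) * N u s))\<^sup>2) = complex_of_real (\<Sum>u\<in>A. \<Sum>v\<in>A. (cmod (\<Sum>r\<in>P. cnj (N v r) * N u r))\<^sup>2)" unfolding L .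
  then show ?thesis by (simp only: of_real_eq_iff)
qed

lemma bij_divmod:
  assumes "0 < (n::nat)"
  shows "bij_betw (\<lambda>p. (p div n, p mod n)) {..<n^2} ({..<n} \<times> {..<n})"
proof (rule bij_betw_byWitness[where f'="\<lambda>(a,c). a*n+c"])
  show "(\<lambda>p. (p div n, p mod n)) ` {..<n^2} \<subseteq> {..<n} \<times> {..<n}"
    using assms by (auto simp: power2_eq_square less_mult_imp_div_less)
  show "(\<lambda>(a, c). a * n + c) ` ({..<n} \<times> {..<n}) \<subseteq> {..<n^2}"
  proof
    fix y assume "y \<in> (\<lambda>(a, c). a * n + c) ` ({..<n} \<times> {..<n})"
    then obtain a c where x: "y = a*n+c" "a < n" "c < n" by auto
    have "a*n + c < a*n + n" using x by simp
    also have "\<dots> = (a+1)*n" by simp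
    also have "\<dots> \<le> n*n" using x by (intro mult_right_mono) auto
    finally show "y \<in> {..<n^2}" using x by (simp add: power2_eq_square)
  qed
qed (use assms in auto)

lemma dsum0:
  fixes f :: "'a \<Rightarrow> 'a \<Rightarrow> real"
  assumes "finite A" "\<And>x y. x\<in>A \<Longrightarrow> y\<in>A \<Longrightarrow> f x y \<ge> 0" "(\<Sum>x\<in>A. \<Sum>y\<in>A. f x y) \<le> 0"
    "x \<in> A" "y \<in> A"
  shows "f x y = 0"
proof -
  have nn: "\<And>x. x \<in> A \<Longrightarrow> (\<Sum>y\<in>A. f x y) \<ge> 0" using assms(2) by (simp add: sum_nonneg)
  hence "(\<Sum>x\<in>A. \<Sum>y\<in>A. f x y) \<ge> 0" by (simp add: sum_nonneg)
  hence "(\<Sum>x\<in>A. \<Sum>y\<in>A. f x y) = 0" using assms(3) by simp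
  hence "(\<Sum>y\<in>A. f x y) = 0" using sum_nonneg_eq_0_iff[OF assms(1), of "\<lambda>x. \<Sum>y\<in>A. f x y"] nn assms(4) by auto
  thus ?thesis using sum_nonneg_eq_0_iff[OF assms(1), of "f x"] assms(2,4,5) by auto
qed

lemma test1:
  fixes n a :: nat assumes "a < n"
  shows "(\<Sum>v\<in>{..<n}\<times>{..<n}. if fst v = a then 0 else 1::real) = real n * real n - real n"
proof -
  have "(\<Sum>v\<in>{..<n}\<times>{..<n}. if fst v = a then 0 else 1::real) = (\<Sum>b<n. \<Sum>d<n. if b = a then 0 else 1::real)"
    by (simp add: sum.cartesian_product')
  also have "\<dots> = (\<Sum>b<n. real n - (if b = a then real n else 0))" by (intro sum.cong) auto
  also have "\<dots> = real n * real n - real n" using assms by (simp add: sum_subtractf)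
  finally show ?thesis .
qed

lemma test2:
  fixes n :: nat
  shows "(\<Sum>r\<in>{..<n}\<times>{..<n}. \<Sum>s\<in>{..<n}\<times>{..<n}.
     if (fst s = fst r \<and> snd s = snd r) \<or> (fst s = snd r \<and> snd s = fst r) then 1 else 0::real) = 2 * real n * real n - real n"
proof -
  have "(\<Sum>r\<in>{..<n}\<times>{..<n}. \<Sum>s\<in>{..<n}\<times>{..<n}.
     if (fst s = fst r \<and> snd s = snd r) \<or> (fst s = snd r \<and> snd s = fst r) then 1 else 0::real)
   = (\<Sum>i<n. \<Sum>j<n. \<Sum>k<n. \<Sum>l<n. if (k = i \<and> l = j) \<or> (k = j \<and> l = i) then 1 else 0::real)"
    by (simp add: sum.cartesian_product')
  also have "\<dots> = (\<Sum>i<n. \<Sum>j<n. \<Sum>k<n. \<Sum>l<n. (if l = j then (if k = i then 1 else 0) else 0)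
        + (if l = i then (if k = j then 1 else 0) else 0) - (if l = j then (if k = i then (if i = j then 1 else 0) else 0) else 0) ::real)"
    by (intro sum.cong refl) auto
  also have "\<dots> = (\<Sum>i<n. \<Sum>j<n. 2 - (if i = j then 1 else 0::real))"
    by (intro sum.cong refl) (simp add: sum.distrib sum_subtractf)
  also have "\<dots> = (\<Sum>i<n. 2 * real n - 1)"
    by (simp add: sum_subtractf)
  also have "\<dots> = 2 * real n * real n - real n" by (simp add: algebra_simps)
  finally show ?thesis .
qed
theorem theorem6:
  fixes n :: nat and B :: "nat \<Rightarrow> nat \<Rightarrow> nat \<Rightarrow> complex"
  assumes "\<forall>a<n. complex_hadamard n (B a)"
  shows "complete_MUH n B \<longleftrightarrow>
    (\<forall>i j k l. i \<le> j \<and> j < n \<and> k \<le> l \<and> l < n \<and> (i, j) \<noteq> (k, l) \<longrightarrow>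
       cinner (n^2) (schur (block_row n B i) (block_row n B j))
                    (schur (block_row n B k) (block_row n B l)) = 0)"
proof (cases "n = 0")
  case True
  then show ?thesis by (simp add: complete_MUH_def)
next
  case False
  hence n0: "0 < n" by simp
  have rn: "real n > 0" using n0 by simp
  define A where "A = {..<n} \<times> {..<n}"
  have finA: "finite A" unfolding A_def by simp
  have cardA: "card A = n * n" unfolding A_def by simp
  define X where "X u t = B (fst u) t (snd u)" for u :: "nat \<times> nat" and t
  define ci where "ci u v = (\<Sum>t<n. cnj (X u t) * X v t)" for u v
  define N where "N u r = X u (fst r) * X u (snd r)" for u r :: "nat \<times> nat"
  define G where "G r s = (\<Sum>u\<in>A. cnj (N u r) * N u s)" for r s
  define same where "same r s \<longleftrightarrow> (fst s = fst r \<and> snd s = snd r) \<or> (fst s = snd r \<and> snd s = fst r)"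
    for r s :: "nat \<times> nat"
  have h1: "cnj (X u t) * X u t = 1 / of_nat n" if "u \<in> A" "t < n" for u t
  proof -
    have "cmod (X u t) = 1 / sqrt (real n)"
      using assms that unfolding A_def X_def complex_hadamard_def by auto
    hence "(cmod (X u t))^2 = 1 / real n" using rn by (simp add: power_divide)
    hence "complex_of_real ((cmod (X u t))^2) = 1 / of_nat n" by simp
    thus ?thesis using complex_norm_square[of "X u t"] by (simp add: mult.commute)
  qed
  have h2: "ci u v = (if u = v then 1 else 0)" if "u \<in> A" "v \<in> A" "fst u = fst v" for u v
  proof -
    have "unitary_mat n (B (fst u))" using assms that unfolding A_def complex_hadamard_def by auto
    thus ?thesis using that unfolding unitary_mat_def ci_def X_def A_def
      by (cases u, cases v) auto
  qed
  have cin: "cinner (n^2) (schur (block_row n B i) (block_row n B j))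
                    (schur (block_row n B k) (block_row n B l)) = G (i,j) (k,l)" for i j k l
  proof -
    have "cinner (n^2) (schur (block_row n B i) (block_row n B j))
                    (schur (block_row n B k) (block_row n B l))
       = (\<Sum>p<n^2. (\<lambda>u. cnj (N u (i,j)) * N u (k,l)) (p div n, p mod n))"
      unfolding cinner_def schur_def block_row_def N_def X_def by simp
    also have "\<dots> = G (i,j) (k,l)" unfolding G_def A_def
      by (rule sum.reindex_bij_betw[OF bij_divmod[OF n0]])
    finally show ?thesis .
  qed
  have Gsym1: "G (j,i) s = G (i,j) s" for i j s unfolding G_def N_def by (simp add: mult_ac)
  have Gsym2: "G r (l,k) = G r (k,l)" for k l r unfolding G_def N_def by (simp add: mult_ac)
  have Gdiag: "G r r = 1" if "r \<in> A" for r
  proof -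
    have "G r r = (\<Sum>u\<in>A. (cnj (X u (fst r)) * X u (fst r)) * (cnj (X u (snd r)) * X u (snd r)))"
      unfolding G_def N_def by (simp add: mult_ac)
    also have "\<dots> = (\<Sum>u\<in>A. 1 / of_nat n * (1 / of_nat n))"
      using that h1 by (intro sum.cong refl) (auto simp: A_def)
    also have "\<dots> = 1" using cardA rn by (simp add: field_simps)
    finally show ?thesis .
  qed
  have Gsame: "G r s = 1" if "same r s" "r \<in> A" for r s
  proof -
    obtain i j where r: "r = (i,j)" by fastforce
    have "s = (i,j) \<or> s = (j,i)" using that(1) r unfolding same_def by (cases s) auto
    thus ?thesis using Gdiag[OF that(2)] Gsym2 r by auto
  qed
  have orth_iff: "(\<forall>i j k l. i \<le> j \<and> j < n \<and> k \<le> l \<and> l < n \<and> (i, j) \<noteq> (k, l) \<longrightarrow>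
       cinner (n^2) (schur (block_row n B i) (block_row n B j))
                    (schur (block_row n B k) (block_row n B l)) = 0)
     \<longleftrightarrow> (\<forall>r\<in>A. \<forall>s\<in>A. \<not> same r s \<longrightarrow> G r s = 0)" (is "?L \<longleftrightarrow> ?R")
  proof
    assume L: ?L
    show ?R
    proof (intro ballI impI)
      fix r s assume rs: "r \<in> A" "s \<in> A" "\<not> same r s"
      obtain i j k l where r: "r = (i,j)" and s: "s = (k,l)" by fastforce
      have e1: "G r s = G (min i j, max i j) s" using Gsym1 r by (cases "i \<le> j") (auto simp: min_def max_def)
      have e2: "G (min i j, max i j) s = G (min i j, max i j) (min k l, max k l)"
        using Gsym2 s by (cases "k \<le> l") (auto simp: min_def max_def)
      have "(min i j, max i j) \<noteq> (min k l, max k l)"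
        using rs(3) r s unfolding same_def by (auto simp: min_def max_def split: if_splits)
      hence "G (min i j, max i j) (min k l, max k l) = 0"
        using L[rule_format, of "min i j" "max i j" "min k l" "max k l"] rs r s cin unfolding A_def by (auto simp: min.coboundedI1)
      thus "G r s = 0" using e1 e2 by simp
    qed
  next
    assume R: ?R
    show ?L
    proof (intro allI impI)
      fix i j k l assume h: "i \<le> j \<and> j < n \<and> k \<le> l \<and> l < n \<and> (i, j) \<noteq> (k, l)"
      hence "\<not> same (i,j) (k,l)" unfolding same_def by auto
      thus "cinner (n^2) (schur (block_row n B i) (block_row n B j))
                    (schur (block_row n B k) (block_row n B l)) = 0"
        using R h cin unfolding A_def by auto
    qed
  qed
  have cisq: "(\<Sum>r\<in>A. cnj (N v r) * N u r) = (ci v u)^2" for u v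
  proof -
    have "(\<Sum>r\<in>A. cnj (N v r) * N u r) = (\<Sum>i<n. \<Sum>j<n. (cnj (X v i) * X u i) * (cnj (X v j) * X u j))"
      unfolding A_def N_def by (simp add: sum.cartesian_product' mult_ac)
    also have "\<dots> = (ci v u)^2" unfolding ci_def power2_eq_square sum_product ..
    finally show ?thesis .
  qed
  have E4: "(\<Sum>u\<in>A. \<Sum>v\<in>A. (cmod (ci v u))^4) = (\<Sum>r\<in>A. \<Sum>s\<in>A. (cmod (G r s))^2)"
  proof -
    have "(\<Sum>u\<in>A. \<Sum>v\<in>A. (cmod (ci v u))^4) = (\<Sum>u\<in>A. \<Sum>v\<in>A. (cmod (\<Sum>r\<in>A. cnj (N v r) * N u r))\<^sup>2)"
      unfolding cisq by (simp add: norm_power power_mult[symmetric])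
    also have "\<dots> = (\<Sum>r\<in>A. \<Sum>s\<in>A. (cmod (G r s))^2)"
      unfolding G_def by (rule frob[OF finA finA])
    finally show ?thesis .
  qed
  have E2: "(\<Sum>u\<in>A. \<Sum>v\<in>A. (cmod (ci v u))^2) = (\<Sum>i<n. \<Sum>j<n. (cmod (\<Sum>u\<in>A. cnj (X u i) * X u j))^2)"
    unfolding ci_def by (rule frob[OF finA finite_lessThan])
  have Lsplit: "(\<Sum>u\<in>A. \<Sum>v\<in>A. (cmod (ci v u))^m) = real n * real n
      + (\<Sum>u\<in>A. \<Sum>v\<in>A. if fst v = fst u then 0 else (cmod (ci v u))^m)" if "m > 0" for m
  proof -
    have "(\<Sum>u\<in>A. \<Sum>v\<in>A. (cmod (ci v u))^m) = (\<Sum>u\<in>A. \<Sum>v\<in>A. (if v = u then 1 else 0)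
         + (if fst v = fst u then 0 else (cmod (ci v u))^m))"
      using h2 that by (intro sum.cong refl) auto
    also have "\<dots> = (\<Sum>u\<in>A. 1) + (\<Sum>u\<in>A. \<Sum>v\<in>A. if fst v = fst u then 0 else (cmod (ci v u))^m)"
      using finA by (simp add: sum.distrib)
    finally show ?thesis using cardA by simp
  qed
  have Kc: "(\<Sum>u\<in>A. \<Sum>v\<in>A. if fst v = fst u then 0 else 1::real) = real n * real n * (real n * real n - real n)"
  proof -
    have "(\<Sum>u\<in>A. \<Sum>v\<in>A. if fst v = fst u then 0 else 1::real) = (\<Sum>u\<in>A. real n * real n - real n)"
      by (intro sum.cong refl) (auto simp: A_def test1)
    thus ?thesis using cardA by simp
  qed
  have Dc: "(\<Sum>r\<in>A. \<Sum>s\<in>A. if same r s then 1 else 0::real) = 2 * real n * real n - real n"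
    unfolding A_def same_def by (rule test2)
  define Off where "Off = (\<Sum>r\<in>A. \<Sum>s\<in>A. if same r s then 0 else (cmod (G r s))^2)"
  have Rsplit: "(\<Sum>r\<in>A. \<Sum>s\<in>A. (cmod (G r s))^2) = 2 * real n * real n - real n + Off"
  proof -
    have "(\<Sum>r\<in>A. \<Sum>s\<in>A. (cmod (G r s))^2) = (\<Sum>r\<in>A. \<Sum>s\<in>A. (if same r s then 1 else 0)
          + (if same r s then 0 else (cmod (G r s))^2))"
      using Gsame by (intro sum.cong refl) auto
    also have "\<dots> = 2 * real n * real n - real n + Off" unfolding Off_def Dc[symmetric]
      by (simp add: sum.distrib)
    finally show ?thesis .
  qed
  define C4 where "C4 = (\<Sum>u\<in>A. \<Sum>v\<in>A. if fst v = fst u then 0 else (cmod (ci v u))^4)"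
  define C2 where "C2 = (\<Sum>u\<in>A. \<Sum>v\<in>A. if fst v = fst u then 0 else (cmod (ci v u))^2)"
  have key: "real n * real n + C4 = 2 * real n * real n - real n + Off"
    using E4 Rsplit Lsplit[of 4] unfolding C4_def by simp
  have cinci: "cinner n (col (B a) j) (col (B b) k) = ci (a,j) (b,k)" for a b j k
    unfolding cinner_def col_def ci_def X_def by simp
  show ?thesis unfolding orth_iff
  proof
    assume cm: "complete_MUH n B"
    have sq4: "sqrt (real n)^4 = real n * real n"
      by (simp add: power4_eq_xxxx)
    have mu: "cmod (ci v u) = 1 / sqrt (real n)" if "u \<in> A" "v \<in> A" "fst v \<noteq> fst u" for u v
    proof -
      obtain a j b k where "v = (a,j)" "u = (b,k)" by fastforce
      thus ?thesis using cm that unfolding complete_MUH_def mutually_unbiased_def A_def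
        by (auto simp: cinci)
    qed
    have "C4 = (\<Sum>u\<in>A. \<Sum>v\<in>A. (if fst v = fst u then 0 else 1) / (real n * real n))"
      unfolding C4_def using mu rn sq4 by (intro sum.cong refl) (auto simp: power_divide)
    also have "\<dots> = real n * real n - real n"
      unfolding sum_divide_distrib[symmetric] Kc using rn by (simp add: field_simps)
    finally have "Off = 0" using key by simp
    have "(if same r s then 0 else (cmod (G r s))^2) = 0" if "r \<in> A" "s \<in> A" for r s
      by (rule dsum0[OF finA _ _ that]) (use \<open>Off = 0\<close> in \<open>auto simp: Off_def\<close>)
    thus "\<forall>r\<in>A. \<forall>s\<in>A. \<not> same r s \<longrightarrow> G r s = 0" by fastforce
  next
    assume R: "\<forall>r\<in>A. \<forall>s\<in>A. \<not> same r s \<longrightarrow> G r s = 0"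
    have "Off = 0" unfolding Off_def using R by (intro sum.neutral ballI) auto
    hence C4v: "C4 = real n * real n - real n" using key by simp
    have "(\<Sum>i<n. \<Sum>j<n. (cmod (\<Sum>u\<in>A. cnj (X u i) * X u j))^2) \<ge> (\<Sum>i<n. (cmod (\<Sum>u\<in>A. cnj (X u i) * X u i))^2)"
      by (intro sum_mono member_le_sum) auto
    also have "(\<Sum>i<n. (cmod (\<Sum>u\<in>A. cnj (X u i) * X u i))^2) = (\<Sum>i<n. real n * real n)"
    proof (intro sum.cong refl)
      fix i assume "i \<in> {..<n}"
      hence "(\<Sum>u\<in>A. cnj (X u i) * X u i) = (\<Sum>u\<in>A. 1 / of_nat n)" using h1 by (intro sum.cong) auto
      also have "\<dots> = of_nat n" using cardA rn by simp
      finally show "(cmod (\<Sum>u\<in>A. cnj (X u i) * X u i))^2 = real n * real n"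
        by (simp add: power2_eq_square)
    qed
    finally have "real n * real n + C2 \<ge> real n * (real n * real n)"
      using E2 Lsplit[of 2] unfolding C2_def by simp
    hence C2v: "C2 \<ge> real n * (real n * real n) - real n * real n" by simp
    define S where "S = (\<Sum>u\<in>A. \<Sum>v\<in>A. if fst v = fst u then 0 else ((cmod (ci v u))^2 - 1 / real n)^2)"
    have "S = C4 - 2 / real n * C2 + (\<Sum>u\<in>A. \<Sum>v\<in>A. if fst v = fst u then 0 else 1::real) / (real n * real n)"
    proof -
      have "S = (\<Sum>u\<in>A. \<Sum>v\<in>A. (if fst v = fst u then 0 else (cmod (ci v u))^4)
          - 2 / real n * (if fst v = fst u then 0 else (cmod (ci v u))^2)
          + (if fst v = fst u then 0 else 1) / (real n * real n))"
        unfolding S_def using rn by (intro sum.cong refl) (auto simp: power2_eq_square power4_eq_xxxx field_simps)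
      thus ?thesis unfolding C4_def C2_def
        by (simp add: sum.distrib sum_subtractf sum_distrib_left sum_divide_distrib)
    qed
    also have "\<dots> \<le> 0"
    proof -
      have "2 / real n * C2 \<ge> 2 / real n * (real n * (real n * real n) - real n * real n)"
        using C2v rn by (intro mult_left_mono) auto
      moreover have "2 / real n * (real n * (real n * real n) - real n * real n) = 2 * (real n * real n - real n)"
        using rn by (simp add: field_simps)
      moreover have "real n * real n * (real n * real n - real n) / (real n * real n) = real n * real n - real n"
        using rn by simp
      ultimately show ?thesis unfolding Kc C4v by argo
    qed
    finally have S0: "S \<le> 0" .
    have cross: "cmod (ci v u) = 1 / sqrt (real n)" if "u \<in> A" "v \<in> A" "fst v \<noteq> fst u" for u v
    proof -
      have "(if fst v = fst u then 0 else ((cmod (ci v u))^2 - 1 / real n)^2) = 0"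
        by (rule dsum0[OF finA _ _ that(1,2)]) (use S0 in \<open>auto simp: S_def\<close>)
      hence "(cmod (ci v u))^2 = 1 / real n" using that by simp
      hence "sqrt ((cmod (ci v u))^2) = sqrt (1 / real n)" by simp
      thus ?thesis by (simp add: real_sqrt_divide)
    qed
    show "complete_MUH n B" unfolding complete_MUH_def mutually_unbiased_def
    proof (intro conjI allI impI)
      fix a b j k assume h: "a < n" "b < n" "a \<noteq> b" "j < n" "k < n"
      show "cmod (cinner n (col (B a) j) (col (B b) k)) = 1 / sqrt (real n)"
        unfolding cinci using cross[of "(b,k)" "(a,j)"] h by (auto simp: A_def)
    qed (use assms in auto)
  qed
qed
end
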